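(* Let $n\ge 2$, $\sigma\ge 0$, let $z\in\mathbb{C}^n$ satisfy $|z_1|=\cdots=|z_n|=1$, let $W\in\mathbb{C}^{n\times n}$ be a Hermitian $z$-discordant matrix, and let $C=zz^*+\sigma W$. Let $x\in\mathbb{C}^n$ be a global optimizer of \[\max_{x\in\mathbb{C}^n} x^*Cx \quad\text{subject to } |x_1|=\cdots=|x_n|=1\] satisfying $z^*x=|z^*x|$. Then \[\|x-z\|_\infty\le 6\left(\sqrt{\log n}+29\sigma\right)\sigma n^{-1/2},\qquad \|x-z\|_2\le 12\sigma.\] Furthermore, if $\sigma\le\frac{1}{18}n^{1/4}$, then the semidefinite program \[\max_{X\in\mathbb{C}^{n\times n}} \operatorname{tr}(CX)\quad\text{subject to } \operatorname{diag}(X)=\mathbf{1},\ X\succeq 0\] has, as its unique solution, the rank-one matrix $X=xx^*$.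
   Context: For $z\in\mathbb{C}^n$ with unit-modulus entries, a matrix $W\in\mathbb{C}^{n\times n}$ is called $z$-discordant if it is Hermitian and satisfies both $\|W\|_{\mathrm{op}}\le 3\sqrt{n}$ (operator norm = largest singular value) and $\|Wz\|_\infty\le 3\sqrt{n\log n}$. Here $\mathbf{1}$ is the all-ones vector, $\operatorname{diag}(X)$ the vector of diagonal entries, $X\succeq0$ means Hermitian positive semidefinite, $\log$ the natural logarithm. *)

theory Defs
  imports "HOL-Analysis.Analysis"
begin

text \<open>Vectors in C^n are complex^'n, matrices are complex^'n^'n (n = CARD('n)).\<close>

definition hermitian :: "complex^'n^'n \<Rightarrow> bool" where
  "hermitian A \<longleftrightarrow> (\<forall>i j. A $ i $ j = cnj (A $ j $ i))"

definition cinner :: "complex^'n \<Rightarrow> complex^'n \<Rightarrow> complex" where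
  "cinner u v = (\<Sum>i\<in>UNIV. cnj (u $ i) * v $ i)"

definition qform :: "complex^'n^'n \<Rightarrow> complex^'n \<Rightarrow> complex" where
  "qform A v = cinner v (A *v v)"

definition outer :: "complex^'n \<Rightarrow> complex^'n \<Rightarrow> complex^'n^'n" where
  "outer u v = (\<chi> i j. u $ i * cnj (v $ j))"

definition inf_norm :: "complex^'n \<Rightarrow> real" where
  "inf_norm v = Max (range (\<lambda>i. cmod (v $ i)))"

definition op_norm :: "complex^'n^'n \<Rightarrow> real" where
  "op_norm A = onorm (\<lambda>v. A *v v)"

definition unimodular :: "complex^'n \<Rightarrow> bool" where
  "unimodular v \<longleftrightarrow> (\<forall>i. cmod (v $ i) = 1)"

definition discordant :: "complex^'n \<Rightarrow> complex^'n^'n \<Rightarrow> bool" where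
  "discordant z W \<longleftrightarrow> hermitian W
     \<and> op_norm W \<le> 3 * sqrt (real CARD('n))
     \<and> inf_norm (W *v z) \<le> 3 * sqrt (real CARD('n) * ln (real CARD('n)))"

definition trace_c :: "complex^'n^'n \<Rightarrow> complex" where
  "trace_c A = (\<Sum>i\<in>UNIV. A $ i $ i)"

definition psd :: "complex^'n^'n \<Rightarrow> bool" where
  "psd X \<longleftrightarrow> hermitian X \<and> (\<forall>v. qform X v \<in> \<real> \<and> 0 \<le> Re (qform X v))"

definition sdp_feasible :: "complex^'n^'n \<Rightarrow> bool" where
  "sdp_feasible X \<longleftrightarrow> (\<forall>i. X $ i $ i = 1) \<and> psd X"

end

theory Submission
  imports Defs
begin


lemma mv_nth: "(A *v v) $ i = (\<Sum>j\<in>UNIV. A$i$j * v$j)"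
  by (simp add: matrix_vector_mult_def)

lemma norm_sq: "(norm (v::complex^'n))^2 = (\<Sum>i\<in>UNIV. (cmod (v$i))^2)"
  by (simp add: norm_vec_def L2_set_def sum_nonneg)

lemma cinner_self: "cinner v v = of_real ((norm v)^2)"
proof -
  have "cinner v v = (\<Sum>i\<in>UNIV. of_real ((cmod (v$i))^2))"
    unfolding cinner_def by (intro sum.cong refl) (metis complex_norm_square mult.commute)
  also have "\<dots> = of_real ((norm v)^2)" by (simp add: norm_sq)
  finally show ?thesis .
qed

lemma cinner_cnj: "cnj (cinner u v) = cinner v u"
  by (simp add: cinner_def mult.commute)

lemma cinner_add_right: "cinner u (v + w) = cinner u v + cinner u w"
  by (simp add: cinner_def distrib_left sum.distrib)
lemma cinner_add_left: "cinner (u + v) w = cinner u w + cinner v w"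
  by (simp add: cinner_def distrib_right sum.distrib)
lemma cinner_diff_right: "cinner u (v - w) = cinner u v - cinner u w"
  by (simp add: cinner_def right_diff_distrib sum_subtractf)
lemma cinner_diff_left: "cinner (u - v) w = cinner u w - cinner v w"
  by (simp add: cinner_def left_diff_distrib sum_subtractf)
lemma cinner_scale_right: "cinner u (c *s v) = c * cinner u v"
  by (simp add: cinner_def sum_distrib_left algebra_simps)
lemma cinner_scale_left: "cinner (c *s u) v = cnj c * cinner u v"
  by (simp add: cinner_def sum_distrib_left algebra_simps)
lemma cinner_zero_right[simp]: "cinner u 0 = 0" by (simp add: cinner_def)
lemma cinner_zero_left[simp]: "cinner 0 u = 0" by (simp add: cinner_def)

lemma cinner_cs: "cmod (cinner u v) \<le> norm u * norm v"
proof -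
  have "cmod (cinner u v) \<le> (\<Sum>i\<in>UNIV. cmod (cnj (u$i) * v$i))"
    unfolding cinner_def by (rule norm_sum)
  also have "\<dots> = (\<Sum>i\<in>UNIV. \<bar>cmod (u$i)\<bar> * \<bar>cmod (v$i)\<bar>)"
    by (simp add: norm_mult)
  also have "\<dots> \<le> L2_set (\<lambda>i. cmod (u$i)) UNIV * L2_set (\<lambda>i. cmod (v$i)) UNIV"
    by (rule L2_set_mult_ineq)
  finally show ?thesis by (simp add: norm_vec_def)
qed

lemma herm_move:
  assumes "hermitian A"
  shows "cinner u (A *v v) = cinner (A *v u) v"
proof -
  have "cinner u (A *v v) = (\<Sum>i\<in>UNIV. \<Sum>j\<in>UNIV. cnj (u$i) * (A$i$j * v$j))"
    by (simp add: cinner_def mv_nth sum_distrib_left)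
  also have "\<dots> = (\<Sum>j\<in>UNIV. \<Sum>i\<in>UNIV. cnj (u$i) * (A$i$j * v$j))"
    by (rule sum.swap)
  also have "\<dots> = (\<Sum>j\<in>UNIV. cnj (\<Sum>i\<in>UNIV. A$j$i * u$i) * v$j)"
  proof (rule sum.cong[OF refl])
    fix j
    have "cnj (\<Sum>i\<in>UNIV. A$j$i * u$i) * v$j = (\<Sum>i\<in>UNIV. cnj (A$j$i) * cnj (u$i) * v$j)"
      by (simp add: sum_distrib_right)
    also have "\<dots> = (\<Sum>i\<in>UNIV. cnj (u$i) * (A$i$j * v$j))"
      using assms unfolding hermitian_def by (intro sum.cong refl) (metis mult.commute mult.left_commute)
    finally show "(\<Sum>i\<in>UNIV. cnj (u$i) * (A$i$j * v$j)) = cnj (\<Sum>i\<in>UNIV. A$j$i * u$i) * v$j" by simp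
  qed
  also have "\<dots> = cinner (A *v u) v" by (simp add: cinner_def mv_nth)
  finally show ?thesis .
qed

lemma qform_real: "hermitian A \<Longrightarrow> cnj (qform A v) = qform A v"
  unfolding qform_def by (metis cinner_cnj herm_move)

lemma onorm_bd: "norm (A *v v) \<le> op_norm A * norm (v::complex^'n)"
  unfolding op_norm_def by (rule onorm) (rule matrix_vector_mul_bounded_linear)

lemma comp_le: "cmod ((A *v v) $ i) \<le> op_norm A * norm (v::complex^'n)"
  using Finite_Cartesian_Product.norm_nth_le[of "A *v v" i] onorm_bd[of A v] by linarith



lemma unimod_norm_sq: "unimodular v \<Longrightarrow> (norm v)^2 = real CARD('n)" for v :: "complex^'n"
  by (simp add: norm_sq unimodular_def)

lemma cinner_axis: "cinner (axis i 1) v = v $ i"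
proof -
  have "cinner (axis i 1) v = (\<Sum>j\<in>UNIV. if j = i then v$j else 0)"
    unfolding cinner_def by (intro sum.cong) (auto simp: axis_def)
  then show ?thesis by simp
qed

lemma mv_axis: "(A *v axis i 1) $ k = A $ k $ i"
proof -
  have "(A *v axis i 1) $ k = (\<Sum>j\<in>UNIV. if j = i then A$k$j else 0)"
    unfolding mv_nth by (intro sum.cong) (auto simp: axis_def)
  then show ?thesis by simp
qed

lemma cinner_mv_axis: "cinner (axis i 1) (A *v axis i 1) = A $ i $ i"
  by (simp add: cinner_axis mv_axis)

lemma herm_diag_real: "hermitian A \<Longrightarrow> A $ i $ i = of_real (Re (A $ i $ i))"
  unfolding hermitian_def by (metis Reals_cnj_iff complex_is_Real_iff of_real_Re)

lemma qform_axis_shift: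
  assumes "hermitian A"
  shows "qform A (x + t *s axis i 1) = qform A x + cnj t * (A *v x)$i + t * cnj ((A *v x)$i)
          + of_real((cmod t)^2) * A$i$i"
proof -
  have e1: "cinner x (A *v axis i 1) = cnj ((A *v x)$i)"
    using herm_move[OF assms, of x "axis i 1"] by (metis cinner_axis cinner_cnj)
  have e2: "cinner (axis i 1) (A *v x) = (A *v x)$i" by (rule cinner_axis)
  have e3: "cnj t * t = of_real((cmod t)^2)" by (metis complex_norm_square mult.commute)
  have "qform A (x + t *s axis i 1) = cinner (x + t *s axis i 1) (A *v x + t *s (A *v axis i 1))"
    unfolding qform_def by (simp add: matrix_vector_right_distrib vec.scale)
  also have "\<dots> = qform A x + t * cinner x (A *v axis i 1) + cnj t * cinner (axis i 1) (A *v x)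
       + (cnj t * t) * cinner (axis i 1) (A *v axis i 1)"
    unfolding qform_def by (simp add: cinner_add_left cinner_add_right cinner_scale_left cinner_scale_right algebra_simps)
  finally show ?thesis using e1 e2 e3 by (simp add: cinner_mv_axis)
qed

lemma cmod_eq_Re: "cmod z = Re z \<Longrightarrow> z = of_real (cmod z)"
proof -
  assume h: "cmod z = Re z"
  have "(cmod z)^2 = (Re z)^2 + (Im z)^2" by (rule cmod_power2)
  then have "Im z = 0" using h by simp
  then show ?thesis using h by (simp add: complex_eq_iff)
qed

lemma coord_opt:
  fixes A :: "complex^'n^'n" and x :: "complex^'n"
  assumes herm: "hermitian A" and ux: "unimodular x"
    and opt: "\<forall>y. unimodular y \<longrightarrow> Re (qform A y) \<le> Re (qform A x)"
  shows "\<exists>l::real. (A *v x)$i = of_real l * x$i \<and> Re (A$i$i) \<le> l"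
proof -
  define g where "g = (A *v x)$i"
  define c where "c = Re (A$i$i)"
  define h where "h = g - of_real c * x$i"
  have xi: "cmod (x$i) = 1" using ux unfolding unimodular_def by simp
  have xx: "cnj (x$i) * x$i = 1"
    by (metis xi complex_norm_square mult.commute of_real_1 power_one)
  have Aii: "A$i$i = of_real c" unfolding c_def by (rule herm_diag_real[OF herm])
  have key: "Re (cnj w * h) \<le> Re (cnj (x$i) * h)" if w: "cmod w = 1" for w
  proof -
    define t where "t = w - x$i"
    define y where "y = x + t *s axis i 1"
    have yk: "y $ k = (if k = i then w else x $ k)" for k
      by (simp add: y_def t_def axis_def)
    have uy: "unimodular y" using ux w unfolding unimodular_def by (simp add: yk)
    have "Re (qform A y) \<le> Re (qform A x)" using opt uy by blast
    then have le: "Re (cnj t * g + t * cnj g) + (cmod t)^2 * c \<le> 0"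
      unfolding y_def qform_axis_shift[OF herm] g_def[symmetric] Aii by simp
    have ww: "cnj w * w = 1"
      by (metis w complex_norm_square mult.commute of_real_1 power_one)
    have tt: "of_real ((cmod t)^2) = cnj t * t" by (metis complex_norm_square mult.commute)
    have "(cmod t)^2 = Re (cnj t * t)" by (metis tt Re_complex_of_real)
    also have "cnj t * t = 2 - cnj w * x$i - cnj (x$i) * w"
      unfolding t_def using ww xx by (simp add: algebra_simps)
    finally have ct: "(cmod t)^2 = 2 - 2 * Re (cnj w * x$i)"
      by (simp add: mult.commute)
    have "Re (cnj t * g + t * cnj g) = 2 * Re (cnj w * g) - 2 * Re (cnj (x$i) * g)"
      unfolding t_def by (simp add: algebra_simps)
    moreover have "Re (cnj w * h) = Re (cnj w * g) - c * Re (cnj w * x$i)"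
      unfolding h_def by (simp add: algebra_simps)
    moreover have "Re (cnj (x$i) * h) = Re (cnj (x$i) * g) - c"
      unfolding h_def using xx by (simp add: algebra_simps)
    ultimately show ?thesis using le ct by (simp add: algebra_simps)
  qed
  have hx: "cnj (x$i) * h = of_real (cmod h)"
  proof (cases "h = 0")
    case True then show ?thesis by simp
  next
    case False
    then have hp: "cmod h > 0" by simp
    define w where "w = h / of_real (cmod h)"
    have w1: "cmod w = 1" using hp by (simp add: w_def norm_divide)
    have "cnj w * h = of_real (cmod h)"
      unfolding w_def using hp
      by (simp add: complex_norm_square[symmetric] mult.commute power2_eq_square field_simps)
    then have "cmod h \<le> Re (cnj (x$i) * h)" using key[OF w1] by simp
    moreover have "Re (cnj (x$i) * h) \<le> cmod (cnj (x$i) * h)" by (rule complex_Re_le_cmod)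
    moreover have "cmod (cnj (x$i) * h) = cmod h" using xi by (simp add: norm_mult)
    ultimately have "cmod (cnj (x$i) * h) = Re (cnj (x$i) * h)" by linarith
    then have "cnj (x$i) * h = of_real (cmod (cnj (x$i) * h))" by (rule cmod_eq_Re)
    then show ?thesis using xi by (simp add: norm_mult)
  qed
  have "h = of_real (cmod h) * x$i"
  proof -
    have "h = (x$i * cnj (x$i)) * h" using xx by (simp add: mult.commute)
    also have "\<dots> = x$i * (cnj (x$i) * h)" by (simp add: mult.assoc)
    also have "\<dots> = x$i * of_real (cmod h)" by (simp only: hx)
    finally show ?thesis by (simp add: mult.commute)
  qed
  then have "g = of_real (cmod h + c) * x$i" unfolding h_def by (simp add: algebra_simps)
  then show ?thesis unfolding g_def c_def by (intro exI[of _ "cmod h + Re (A$i$i)"]) simp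
qed



lemma Cmv: "(outer z z + (\<chi> i j. complex_of_real s * W $ i $ j)) *v y = cinner z y *s z + of_real s *s (W *v y)"
proof -
  have "((outer z z + (\<chi> i j. complex_of_real s * W $ i $ j)) *v y) $ i = (cinner z y *s z + of_real s *s (W *v y)) $ i" for i
  proof -
    have "((outer z z + (\<chi> i j. complex_of_real s * W $ i $ j)) *v y) $ i
       = (\<Sum>j\<in>UNIV. z$i * (cnj (z$j) * y$j) + of_real s * (W$i$j * y$j))"
      unfolding mv_nth by (intro sum.cong refl) (simp add: outer_def distrib_right mult.assoc)
    also have "\<dots> = z$i * cinner z y + of_real s * (W *v y)$i"
      by (simp add: sum.distrib sum_distrib_left cinner_def mv_nth)
    finally show ?thesis by (simp add: mult.commute)
  qed
  then show ?thesis by (simp add: vec_eq_iff)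
qed

lemma qC: "qform (outer z z + (\<chi> i j. complex_of_real s * W $ i $ j)) y
   = of_real ((cmod (cinner z y))^2) + of_real s * qform W y"
proof -
  have "qform (outer z z + (\<chi> i j. complex_of_real s * W $ i $ j)) y = cinner y z * cinner z y + of_real s * qform W y"
    unfolding qform_def Cmv by (simp add: cinner_add_right cinner_scale_right)
  also have "cinner y z * cinner z y = of_real ((cmod (cinner z y))^2)"
    by (metis cinner_cnj complex_norm_square mult.commute)
  finally show ?thesis .
qed

lemma hermC: assumes "hermitian W" shows "hermitian (outer z z + (\<chi> i j. complex_of_real s * W $ i $ j))"
  unfolding hermitian_def
proof (intro allI)
  fix i j
  have "W$i$j = cnj (W$j$i)" using assms unfolding hermitian_def by blast
  then show "(outer z z + (\<chi> i j. complex_of_real s * W $ i $ j)) $ i $ j = cnj ((outer z z + (\<chi> i j. complex_of_real s * W $ i $ j)) $ j $ i)"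
    by (simp add: outer_def)
qed

lemma norm_axis_c: "norm (axis i (1::complex) :: complex^'n) = 1"
proof -
  have "(norm (axis i (1::complex) :: complex^'n))^2 = (\<Sum>j\<in>UNIV. if j = i then 1 else 0)"
    unfolding norm_sq by (intro sum.cong) (auto simp: axis_def)
  then show ?thesis by simp
qed

lemma diag_le: "cmod (W $ i $ i) \<le> op_norm W" for W :: "complex^'n^'n"
  using comp_le[of W "axis i 1" i] by (simp add: mv_axis norm_axis_c)

lemma ln_le_sqrt: "x \<ge> 1 \<Longrightarrow> ln x \<le> sqrt x"
proof -
  assume x: "x \<ge> 1"
  define q where "q = sqrt x"
  have q: "q \<ge> 1" "q * q = x" using x by (auto simp: q_def)
  have "ln (q/2) \<le> q/2 - 1" using q by (intro ln_le_minus_one) auto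
  moreover have "ln 2 \<le> (2::real) - 1" by (intro ln_le_minus_one) auto
  moreover have "ln (q/2) = ln q - ln 2" using q by (intro ln_divide_pos) auto
  moreover have "ln x = 2 * ln q"
  proof -
    have "ln x = ln (q * q)" using q by simp
    also have "\<dots> = ln q + ln q" using q by (intro ln_mult_pos) auto
    finally show ?thesis by simp
  qed
  ultimately show "ln x \<le> sqrt x" unfolding q_def[symmetric] by linarith
qed

lemma arith_good:
  fixes s q L d :: real
  assumes "s > 0" "q \<ge> 1" "87 * s^2 < q" "9 * (s * L) < q" "0 \<le> L" "0 \<le> d" "d \<le> 9 * s" "d^2 \<le> 72 * s^2"
  shows "q^2 * (L + d) \<le> (q^2 - d^2/2) * (L + 29 * s)"
proof -
  have h1: "q^2 * d \<le> q^2 * (9 * s)" using assms by (intro mult_left_mono) auto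
  have "(d^2/2) * (L + 29 * s) \<le> (36 * s^2) * (L + 29 * s)" using assms by (intro mult_right_mono) auto
  also have "\<dots> = 4 * s * (9 * (s * L)) + 12 * s * (87 * s^2)" by (simp add: power2_eq_square algebra_simps)
  also have "\<dots> \<le> 4 * s * q + 12 * s * q" using assms by (intro add_mono mult_left_mono) auto
  finally have h2: "(d^2/2) * (L + 29 * s) \<le> 16 * (s * q)" by (simp add: ac_simps)
  have h5: "s * q \<le> s * q^2" using assms by (intro mult_left_mono) (auto simp: power2_eq_square)
  have eq: "(q^2 - d^2/2) * (L + 29 * s) - q^2 * (L + d) = 29 * (s * q^2) - q^2 * d - (d^2/2) * (L + 29 * s)"
    by (simp add: algebra_simps)
  have "q^2 * (9 * s) = 9 * (s * q^2)" by simp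
  moreover have "0 \<le> s * q^2" using assms by simp
  ultimately have "0 \<le> (q^2 - d^2/2) * (L + 29 * s) - q^2 * (L + d)" unfolding eq using h1 h2 h5 by linarith
  then show ?thesis by simp
qed

lemma lin_aux: "D/2 \<le> 36 * q / 87 \<Longrightarrow> 0 < 35 * Q - 101 * q + 174 \<Longrightarrow> Q / 3 + 27 * Q / 87 + (81 * Q / 87 + q) / 6 - 1 \<le> Q - D/2" for q Q D :: real
  by (simp add: field_simps)

lemma arith_bad:
  fixes s q L d :: real
  assumes "s > 0" "q \<ge> 1" "87 * s^2 < q" "9 * (s * L) < q" "0 \<le> L" "0 \<le> d" "d \<le> 9 * s" "d^2 \<le> 72 * s^2"
  shows "q^2 - d^2/2 > 3 * s * q * (L + d + 1) - 1"
proof -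
  have a: "3 * s * q * L < q^2 / 3"
  proof -
    have "3 * s * q * L = q * (9 * (s * L)) / 3" by simp
    also have "\<dots> < q * q / 3" using assms by (intro divide_strict_right_mono mult_strict_left_mono) auto
    finally show ?thesis by (simp add: power2_eq_square)
  qed
  have b: "3 * s * q * d \<le> 27 * q^2 / 87"
  proof -
    have "3 * s * q * d \<le> 3 * s * q * (9 * s)" using assms by (intro mult_left_mono) auto
    also have "\<dots> = 27 * q * (87 * s^2) / 87" by (simp add: power2_eq_square)
    also have "\<dots> \<le> 27 * q * q / 87" using assms by (intro divide_right_mono mult_left_mono) auto
    finally show ?thesis by (simp add: power2_eq_square)
  qed
  have c: "3 * s * q \<le> (81 * q^2 / 87 + q) / 6"
  proof -
    have "0 \<le> (9 * s - 1)^2" by simp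
    moreover have "(9 * s - 1)^2 = 81 * s^2 - 18 * s + 1" by (simp add: power2_eq_square algebra_simps)
    ultimately have "18 * s \<le> 81 * s^2 + 1" by linarith
    also have "\<dots> \<le> 81 * q / 87 + 1" using assms by simp
    finally have "18 * s * q \<le> (81 * q / 87 + 1) * q" using assms by (intro mult_right_mono) auto
    then show ?thesis by (simp add: power2_eq_square algebra_simps)
  qed
  have d: "d^2/2 \<le> 36 * q / 87" using assms by simp
  have g: "0 < 35 * q^2 - 101 * q + 174"
  proof -
    have "0 \<le> (2 * q - 3)^2" by simp
    moreover have "(2 * q - 3)^2 = 4 * q^2 - 12 * q + 9" by (simp add: power2_eq_square algebra_simps)
    ultimately show ?thesis using assms by linarith
  qed
  have eq: "3 * s * q * (L + d + 1) = 3 * s * q * L + 3 * s * q * d + 3 * s * q" by (simp add: algebra_simps)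
  have "3 * s * q * (L + d + 1) - 1 < q^2 / 3 + 27 * q^2 / 87 + (81 * q^2 / 87 + q) / 6 - 1"
    unfolding eq using a b c by linarith
  also have "\<dots> \<le> q^2 - d^2/2" using lin_aux[OF d g] .
  finally show ?thesis .
qed



lemma outer_mv: "outer v v *v w = cinner v w *s v"
  by (simp add: vec_eq_iff mv_nth outer_def cinner_def sum_distrib_left mult.assoc mult.commute mult.left_commute)

lemma qform_outer: "qform (outer v v) w = of_real ((cmod (cinner v w))^2)"
proof -
  have "qform (outer v v) w = cinner v w * cinner w v"
    unfolding qform_def outer_mv cinner_scale_right by simp
  also have "\<dots> = of_real ((cmod (cinner v w))^2)"
    by (metis cinner_cnj complex_norm_square)
  finally show ?thesis .
qed

lemma qform_diff: "qform (A - B) v = qform A v - qform B v"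
  unfolding qform_def by (simp add: matrix_vector_mult_diff_rdistrib cinner_diff_right)

lemma qform_add: "qform (A + B) v = qform A v + qform B v"
  unfolding qform_def by (simp add: matrix_vector_mult_add_rdistrib cinner_add_right)

lemma herm_outer: "hermitian (outer v v)"
  unfolding hermitian_def outer_def by simp

lemma psd_outer: "psd (outer v v)"
  unfolding psd_def using herm_outer by (simp add: qform_outer)

lemma psd_herm: "psd X \<Longrightarrow> hermitian X" unfolding psd_def by blast

lemma psd_Re: "psd X \<Longrightarrow> 0 \<le> Re (qform X v)" unfolding psd_def by blast

lemma psd_cs:
  assumes X: "psd X"
  shows "(cmod ((X *v w)$j))^2 \<le> Re (X$j$j) * Re (qform X w)"
proof -
  define g where "g = (X *v w)$j"
  define a where "a = Re (X$j$j)"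
  define Q where "Q = Re (qform X w)"
  have H: "hermitian X" using X by (rule psd_herm)
  have Xjj: "X$j$j = of_real a" unfolding a_def by (rule herm_diag_real[OF H])
  have a0: "a \<ge> 0"
  proof -
    have "qform X (axis j 1) = X$j$j" unfolding qform_def by (rule cinner_mv_axis)
    then show ?thesis using psd_Re[OF X, of "axis j 1"] unfolding a_def by simp
  qed
  have main: "0 \<le> Q - 2 * s * (cmod g)^2 + s^2 * (cmod g)^2 * a" for s :: real
  proof -
    define t where "t = - (of_real s * g)"
    have gg: "cnj g * g = of_real ((cmod g)^2)" by (metis complex_norm_square mult.commute)
    have "0 \<le> Re (qform X (w + t *s axis j 1))" by (rule psd_Re[OF X])
    also have "qform X (w + t *s axis j 1) = qform X w + cnj t * g + t * cnj g + of_real ((cmod t)^2) * X$j$j"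
      unfolding g_def by (rule qform_axis_shift[OF H])
    also have "cnj t * g = - of_real (s * (cmod g)^2)"
    proof -
      have "cnj t * g = - (of_real s * (cnj g * g))" unfolding t_def by (simp add: mult.assoc)
      also have "\<dots> = - of_real (s * (cmod g)^2)" unfolding gg of_real_mult by simp
      finally show ?thesis .
    qed
    also have "t * cnj g = - of_real (s * (cmod g)^2)"
    proof -
      have "t * cnj g = - (of_real s * (cnj g * g))" unfolding t_def by (simp add: mult.commute mult.left_commute)
      also have "\<dots> = - of_real (s * (cmod g)^2)" unfolding gg of_real_mult by simp
      finally show ?thesis .
    qed
    also have "(cmod t)^2 = s^2 * (cmod g)^2" unfolding t_def by (simp add: norm_mult power_mult_distrib)
    finally show ?thesis unfolding Xjj Q_def by (simp add: algebra_simps)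
  qed
  show ?thesis
  proof (cases "a = 0")
    case True
    have "cmod g = 0"
    proof (rule ccontr)
      assume "cmod g \<noteq> 0"
      then have gp: "(cmod g)^2 > 0" by simp
      have "0 \<le> Q - 2 * ((Q + 1) / (2 * (cmod g)^2)) * (cmod g)^2" using main[of "(Q + 1) / (2 * (cmod g)^2)"] True by simp
      also have "\<dots> = -1" using gp by (simp add: field_simps)
      finally show False by simp
    qed
    then show ?thesis unfolding g_def[symmetric] a_def[symmetric] Q_def[symmetric] using True by simp
  next
    case False
    then have ap: "a > 0" using a0 by simp
    have "0 \<le> Q - 2 * (1/a) * (cmod g)^2 + (1/a)^2 * (cmod g)^2 * a" by (rule main)
    also have "\<dots> = Q - (cmod g)^2 / a" using ap by (simp add: power2_eq_square field_simps)
    finally have "(cmod g)^2 / a \<le> Q" by simp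
    then have "(cmod g)^2 \<le> a * Q" using ap by (simp add: divide_le_eq mult.commute)
    then show ?thesis unfolding g_def a_def Q_def .
  qed
qed

lemma psd_diag_zero:
  assumes X: "psd X" and z: "X$i$i = 0"
  shows "X$j$i = 0" "X$i$j = 0"
proof -
  have "qform X (axis i 1) = X$i$i" unfolding qform_def by (rule cinner_mv_axis)
  then have "(cmod ((X *v axis i 1)$j))^2 \<le> 0" using psd_cs[OF X, of "axis i 1" j] z by simp
  then show a: "X$j$i = 0" by (simp add: mv_axis)
  have "X$i$j = cnj (X$j$i)" using psd_herm[OF X] unfolding hermitian_def by blast
  then show "X$i$j = 0" using a by simp
qed


lemma herm_diff: assumes "hermitian A" "hermitian B" shows "hermitian (A - B)"
  unfolding hermitian_def
proof (intro allI)
  fix i j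
  have "A$i$j = cnj (A$j$i)" "B$i$j = cnj (B$j$i)" using assms unfolding hermitian_def by blast+
  then show "(A - B)$i$j = cnj ((A - B)$j$i)" by simp
qed

lemma cinner_col: "hermitian X \<Longrightarrow> cinner (\<chi> i. X$i$j) w = (X *v w)$j"
proof -
  assume H: "hermitian X"
  have "cnj (X$i$j) = X$j$i" for i
  proof -
    have "X$i$j = cnj (X$j$i)" using H unfolding hermitian_def by blast
    then show ?thesis by simp
  qed
  then show ?thesis unfolding cinner_def mv_nth by simp
qed

lemma gram: "psd X \<Longrightarrow> \<exists>V. X = sum_list (map (\<lambda>v. outer v v) V)"
proof (induction "card {i. X$i$i \<noteq> 0}" arbitrary: X rule: less_induct)
  case less
  have H: "hermitian X" using less.prems by (rule psd_herm)
  show ?case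
  proof (cases "\<exists>j. X$j$j \<noteq> 0")
    case False
    have "X = 0"
    proof -
      have "X$i$k = 0" for i k using psd_diag_zero(2)[OF less.prems, of i k] False by blast
      then show ?thesis by (simp add: vec_eq_iff)
    qed
    then show ?thesis by (intro exI[of _ "[]"]) simp
  next
    case True
    then obtain j where j: "X$j$j \<noteq> 0" by blast
    define a where "a = Re (X$j$j)"
    have Xjj: "X$j$j = of_real a" unfolding a_def by (rule herm_diag_real[OF H])
    have a0: "a \<ge> 0"
    proof -
      have "qform X (axis j 1) = X$j$j" unfolding qform_def by (rule cinner_mv_axis)
      then show ?thesis using psd_Re[OF less.prems, of "axis j 1"] unfolding a_def by simp
    qed
    have "a \<noteq> 0"
    proof
      assume "a = 0"
      then have "X$j$j = 0" using Xjj by simp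
      with j show False by simp
    qed
    then have ap: "a > 0" using a0 by simp
    define col where "col = (\<chi> i. X$i$j)"
    define v where "v = of_real (1 / sqrt a) *s col"
    define X' where "X' = X - outer v v"
    define c where "c = (of_real (1 / sqrt a) :: complex)"
    have cc: "cnj c = c" unfolding c_def by simp
    have c2: "c * c = of_real (1 / a)"
    proof -
      have sa: "sqrt a * sqrt a = a" using ap by simp
      have "(1 / sqrt a) * (1 / sqrt a) = 1 / (sqrt a * sqrt a)" by simp
      then have "(1 / sqrt a) * (1 / sqrt a) = 1 / a" unfolding sa .
      then show ?thesis unfolding c_def by (metis of_real_mult)
    qed
    have vi0: "v$i = c * X$i$j" for i unfolding v_def col_def c_def by simp
    have vi: "v$i * cnj (v$i) = of_real ((cmod (X$i$j))^2 / a)" for i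
    proof -
      have "v$i * cnj (v$i) = (c * cnj c) * (X$i$j * cnj (X$i$j))" unfolding vi0 by simp
      also have "\<dots> = of_real (1 / a) * of_real ((cmod (X$i$j))^2)" unfolding cc c2 by (metis complex_norm_square)
      also have "\<dots> = of_real ((cmod (X$i$j))^2 / a)" by (simp only: of_real_mult[symmetric]) simp
      finally show ?thesis .
    qed
    have X'ii: "X'$i$i = X$i$i - of_real ((cmod (X$i$j))^2 / a)" for i
      unfolding X'_def using vi by (simp add: outer_def)
    have psdX': "psd X'"
      unfolding psd_def
    proof (intro conjI allI)
      show "hermitian X'" unfolding X'_def by (rule herm_diff[OF H herm_outer])
    next
      fix w
      have cv: "cinner v w = of_real (1 / sqrt a) * (X *v w)$j"
        unfolding v_def cinner_scale_left col_def cinner_col[OF H] by simp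
      have qX: "qform X w \<in> \<real>" using less.prems unfolding psd_def by blast
      have q': "qform X' w = qform X w - of_real ((cmod (cinner v w))^2)"
        unfolding X'_def qform_diff qform_outer ..
      then show "qform X' w \<in> \<real>" using qX by simp
      have "(cmod (cinner v w))^2 = (cmod ((X *v w)$j))^2 / a"
        unfolding cv using ap by (simp add: norm_divide power_divide)
      also have "\<dots> \<le> Re (qform X w)"
        using psd_cs[OF less.prems, of w j] ap unfolding a_def[symmetric] by (simp add: divide_le_eq mult.commute)
      finally show "0 \<le> Re (qform X' w)" unfolding q' by simp
    qed
    have sub: "{i. X'$i$i \<noteq> 0} \<subset> {i. X$i$i \<noteq> 0}"
    proof
      show "{i. X'$i$i \<noteq> 0} \<subseteq> {i. X$i$i \<noteq> 0}"
      proof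
        fix i assume "i \<in> {i. X'$i$i \<noteq> 0}"
        then have ne: "X'$i$i \<noteq> 0" by simp
        show "i \<in> {i. X$i$i \<noteq> 0}"
        proof (rule ccontr)
          assume "i \<notin> {i. X$i$i \<noteq> 0}"
          then have "X$i$i = 0" by simp
          then have "X$i$j = 0" using psd_diag_zero(2)[OF less.prems] by blast
          then show False using ne X'ii[of i] \<open>X$i$i = 0\<close> by simp
        qed
      qed
      have "X'$j$j = 0" unfolding X'ii Xjj using ap by (simp add: power2_eq_square)
      then show "{i. X'$i$i \<noteq> 0} \<noteq> {i. X$i$i \<noteq> 0}" using j by blast
    qed
    have "card {i. X'$i$i \<noteq> 0} < card {i. X$i$i \<noteq> 0}" by (rule psubset_card_mono) (auto simp: sub)
    then obtain V' where V': "X' = sum_list (map (\<lambda>v. outer v v) V')" using less.hyps psdX' by blast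
    have "X = outer v v + X'" unfolding X'_def by simp
    then show ?thesis using V' by (intro exI[of _ "v # V'"]) simp
  qed
qed



lemma trace_add: "trace_c (A + B) = trace_c A + trace_c B"
  by (simp add: trace_c_def sum.distrib)

lemma trace_zero: "trace_c 0 = 0" by (simp add: trace_c_def)

lemma trace_outer: "trace_c (A ** outer v v) = qform A v"
proof -
  have "trace_c (A ** outer v v) = (\<Sum>i\<in>UNIV. \<Sum>k\<in>UNIV. A$i$k * (v$k * cnj (v$i)))"
    by (simp add: trace_c_def matrix_matrix_mult_def outer_def)
  also have "\<dots> = (\<Sum>i\<in>UNIV. cnj (v$i) * (\<Sum>k\<in>UNIV. A$i$k * v$k))"
    by (simp add: sum_distrib_left mult.commute mult.left_commute)
  also have "\<dots> = qform A v" by (simp add: qform_def cinner_def mv_nth)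
  finally show ?thesis .
qed

lemma trace_gram: "trace_c (A ** sum_list (map (\<lambda>v. outer v v) V)) = sum_list (map (qform A) V)"
  by (induction V) (simp_all add: matrix_add_ldistrib trace_add trace_outer trace_zero)

lemma sum_list_nth2: "(sum_list (map f V)) $ i $ k = sum_list (map (\<lambda>v. (f v) $ i $ k) V)"
  by (induction V) simp_all

lemma Re_sum_list: "Re (sum_list (map f V)) = sum_list (map (\<lambda>v. Re (f v)) V)"
  by (induction V) simp_all

lemma sum_list_mult_right: "sum_list (map (\<lambda>v. f v * c) V) = sum_list (map f V) * (c :: complex)"
  by (induction V) (simp_all add: distrib_right)

lemma of_real_sum_list: "of_real (sum_list (map f V)) = sum_list (map (\<lambda>v. (of_real (f v) :: complex)) V)"
  by (induction V) simp_all

lemma le_sum_list_nonneg: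
  fixes f :: "'a \<Rightarrow> real"
  assumes "\<forall>w\<in>set V. 0 \<le> f w" "v \<in> set V"
  shows "f v \<le> sum_list (map f V)"
  using assms
proof (induction V)
  case Nil then show ?case by simp
next
  case (Cons a V)
  have "0 \<le> sum_list (map f V)" using Cons.prems(1) by (intro sum_list_nonneg) auto
  then show ?case using Cons by auto
qed

lemma sum_list_nonneg_real:
  fixes f :: "'a \<Rightarrow> real"
  shows "\<forall>w\<in>set V. 0 \<le> f w \<Longrightarrow> 0 \<le> sum_list (map f V)"
  by (intro sum_list_nonneg) auto

lemma cmod_diff_sq: "(cmod (a - b))^2 = (cmod a)^2 + (cmod b)^2 - 2 * Re (cnj a * b)"
  by (simp only: cmod_power2) (simp add: power2_eq_square algebra_simps)

lemma shift_qform: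
  assumes H: "hermitian S" and S0: "S *v x = 0"
  shows "qform S (c *s x + u) = qform S u"
proof -
  have "S *v (c *s x + u) = S *v u"
    by (simp add: matrix_vector_right_distrib vec.scale S0)
  moreover have "cinner x (S *v u) = 0" using herm_move[OF H, of x u] S0 by simp
  ultimately show ?thesis unfolding qform_def by (simp add: cinner_add_left cinner_scale_left)
qed



lemma good_case:
  fixes u v e :: complex and l m :: real
  assumes "cmod u = 1" "cmod v = 1" "l \<ge> 0" "m > 0" "of_real l * u = of_real m * v + e"
  shows "cmod (u - v) \<le> 2 * cmod e / m"
proof -
  define p where "p = of_real (l/m) * u"
  have pv: "p - v = e / of_real m" using assms unfolding p_def by (simp add: field_simps)
  have cp: "cmod p = l / m" unfolding p_def using assms(1,3,4) by (simp add: norm_mult norm_divide)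
  have "cmod (u - p) = \<bar>1 - l/m\<bar>"
  proof -
    have "u - p = of_real (1 - l/m) * u" unfolding p_def by (simp add: algebra_simps)
    then have "cmod (u - p) = \<bar>1 - l/m\<bar> * cmod u" by (simp only: norm_mult norm_of_real)
    then show ?thesis using assms by simp
  qed
  also have "\<dots> = \<bar>cmod v - cmod p\<bar>" using assms cp by simp
  also have "\<dots> \<le> cmod (v - p)" by (rule norm_triangle_ineq3)
  also have "\<dots> = cmod (p - v)" by (simp add: norm_minus_commute)
  finally have up: "cmod (u - p) \<le> cmod (p - v)" .
  have "cmod (u - v) \<le> cmod (u - p) + cmod (p - v)" using norm_triangle_ineq[of "u - p" "p - v"] by simp
  also have "\<dots> \<le> 2 * cmod (p - v)" using up by simp
  also have "cmod (p - v) = cmod e / m" using assms by (simp add: pv norm_divide)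
  finally show ?thesis by simp
qed

lemma bad_case:
  fixes u v e :: complex and l m :: real
  assumes "cmod u = 1" "cmod v = 1" "l < 0" "of_real l * u = of_real m * v + e"
  shows "m - cmod e \<le> - l"
proof -
  have "cmod (of_real l * u) = - l" using assms(1,3) by (simp add: norm_mult)
  then have "cmod (of_real m * v + e) = - l" using assms(4) by simp
  moreover have "cmod (of_real m * v) - cmod e \<le> cmod (of_real m * v + e)" by (rule norm_diff_ineq)
  moreover have "cmod (of_real m * v) \<ge> m" using assms by (simp add: norm_mult)
  ultimately show ?thesis by linarith
qed



lemma diag_mv: "((\<chi> i k. if i = k then (of_real (f i)::complex) else 0) *v v)$i = of_real (f i) * v$i"
proof -
  have "((\<chi> i k. if i = k then (of_real (f i)::complex) else 0) *v v)$i = (\<Sum>k\<in>UNIV. if k = i then of_real (f i) * v$i else 0)"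
    unfolding mv_nth by (intro sum.cong) auto
  then show ?thesis by simp
qed

lemma qdiag: "qform (\<chi> i k. if i = k then (of_real (f i)::complex) else 0) v = of_real (\<Sum>i\<in>UNIV. f i * (cmod (v$i))^2)"
proof -
  have "qform (\<chi> i k. if i = k then (of_real (f i)::complex) else 0) v = (\<Sum>i\<in>UNIV. cnj (v$i) * (of_real (f i) * v$i))"
    unfolding qform_def cinner_def diag_mv ..
  also have "\<dots> = (\<Sum>i\<in>UNIV. of_real (f i * (cmod (v$i))^2))"
  proof (intro sum.cong refl)
    fix i
    have "cnj (v$i) * v$i = of_real ((cmod (v$i))^2)" by (metis complex_norm_square mult.commute)
    then show "cnj (v$i) * (of_real (f i) * v$i) = of_real (f i * (cmod (v$i))^2)"
      by (metis mult.left_commute of_real_mult)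
  qed
  finally show ?thesis by simp
qed

lemma sdp_arith:
  fixes q s L d :: real
  assumes q2: "q^2 \<ge> 2" and q0: "q \<ge> 0" and s0: "s \<ge> 0" and s324: "324 * s^2 \<le> q"
    and L0: "L \<ge> 0" and Lq: "L^2 \<le> q" and d0: "d \<ge> 0" and d72: "d^2 \<le> 72 * s^2"
  shows "6 * (L + 29 * s) * s / q \<le> 47/54"
    and "3 * s * q * (L + d) \<le> q^2/4"
    and "d^2 \<le> 2 * q / 9"
    and "(q^2 - q/9) * (3623/5832) - q^2/4 - 2*q/9 - 3 * s * q > 0"
proof -
  have q75: "q > 7/5"
  proof (rule power2_less_imp_less)
    show "(7/5)^2 < q^2" using q2 by (simp add: power2_eq_square)
  qed (use q0 in auto)
  have sL: "18 * (s * L) \<le> q"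
  proof (rule power2_le_imp_le)
    have "(18 * (s * L))^2 = (324 * s^2) * L^2" by (simp add: power_mult_distrib)
    also have "\<dots> \<le> q * q" using s324 Lq L0 q0 by (intro mult_mono) auto
    finally show "(18 * (s * L))^2 \<le> q^2" by (simp add: power2_eq_square)
  qed (use q0 in auto)
  have d9: "d \<le> 9 * s"
  proof (rule power2_le_imp_le)
    have "(9 * s)^2 = 81 * s^2" by (simp add: power_mult_distrib)
    then show "d^2 \<le> (9 * s)^2" using d72 zero_le_power2[of s] by linarith
  qed (use s0 in auto)
  show "6 * (L + 29 * s) * s / q \<le> 47/54"
  proof -
    have "6 * (L + 29 * s) * s = (6 * (s * L)) + 174 * s^2" by (simp add: power2_eq_square algebra_simps)
    also have "\<dots> \<le> q / 3 + 174 * (q / 324)" using sL s324 by (intro add_mono) auto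
    also have "\<dots> = (47/54) * q" by simp
    finally show ?thesis using q75 by (simp add: divide_le_eq)
  qed
  show "3 * s * q * (L + d) \<le> q^2/4"
  proof -
    have a: "3 * s * q * L \<le> q * q / 6"
    proof -
      have "3 * s * q * L = q * (18 * (s * L)) / 6" by simp
      also have "\<dots> \<le> q * q / 6" using sL q0 by (intro divide_right_mono mult_left_mono) auto
      finally show ?thesis .
    qed
    have b: "3 * s * q * d \<le> q * q / 12"
    proof -
      have "3 * s * q * d \<le> 3 * s * q * (9 * s)" using d9 s0 q0 by (intro mult_left_mono) auto
      also have "\<dots> = q * (324 * s^2) / 12" by (simp add: power2_eq_square)
      also have "\<dots> \<le> q * q / 12" using s324 q0 by (intro divide_right_mono mult_left_mono) auto
      finally show ?thesis .
    qed
    have "3 * s * q * (L + d) = 3 * s * q * L + 3 * s * q * d" by (simp add: algebra_simps)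
    then show ?thesis using a b by (simp add: power2_eq_square)
  qed
  show dd: "d^2 \<le> 2 * q / 9" using d72 s324 by simp
  have c: "3 * s * q \<le> 5 * q^2 / 72 + q / 10"
  proof -
    have "0 \<le> (18 * s - 6/5)^2" by simp
    moreover have "(18 * s - 6/5)^2 = 324 * s^2 - (216/5) * s + 36/25" by (simp add: power2_eq_square algebra_simps)
    ultimately have "(216/5) * s \<le> q + 36/25" using s324 by linarith
    then have "s \<le> (5/216) * q + 1/30" by simp
    then have "3 * s * q \<le> 3 * ((5/216) * q + 1/30) * q" using q0 by (intro mult_right_mono) auto
    also have "\<dots> = 5 * q^2 / 72 + q / 10" by (simp add: power2_eq_square algebra_simps)
    finally show ?thesis .
  qed
  have qq: "q^2 \<ge> (7/5) * q" using q75 q0 by (simp add: power2_eq_square mult_right_mono)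
  show "(q^2 - q/9) * (3623/5832) - q^2/4 - 2*q/9 - 3 * s * q > 0"
    using c qq q75 by (simp add: algebra_simps)
qed

context
  fixes z x :: "complex^'n" and W :: "complex^'n^'n" and \<sigma> :: real
  assumes n2: "CARD('n) \<ge> 2"
    and sig: "\<sigma> \<ge> 0"
    and uz: "unimodular z"
    and hW: "hermitian W" and dW: "discordant z W"
    and ux: "unimodular x"
    and opt: "\<forall>y. unimodular y \<longrightarrow>
        Re (qform (outer z z + (\<chi> i j. complex_of_real \<sigma> * W $ i $ j)) y) \<le> Re (qform (outer z z + (\<chi> i j. complex_of_real \<sigma> * W $ i $ j)) x)"
    and phase: "cinner z x = of_real (cmod (cinner z x))"
begin

abbreviation "mm \<equiv> cmod (cinner z x)"
abbreviation "CC \<equiv> outer z z + (\<chi> i j. complex_of_real \<sigma> * W $ i $ j)"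

lemma opW: "op_norm W \<le> 3 * sqrt (real CARD('n))" using dW unfolding discordant_def by blast
lemma infW: "inf_norm (W *v z) \<le> 3 * sqrt (real CARD('n)) * sqrt (ln (real CARD('n)))"
  using dW unfolding discordant_def by (simp add: real_sqrt_mult)

lemma czz: "cinner z z = of_real (real CARD('n))"
  using cinner_self[of z] unimod_norm_sq[OF uz] by simp
lemma cxx: "cinner x x = of_real (real CARD('n))"
  using cinner_self[of x] unimod_norm_sq[OF ux] by simp
lemma cxz: "cinner x z = of_real mm"
  using phase cinner_cnj[of z x] by (metis complex_cnj_complex_of_real)

lemma dsq: "(norm (x - z))^2 = 2 * (real CARD('n)) - 2 * mm"
proof -
  have "of_real ((norm (x - z))^2) = cinner (x - z) (x - z)" by (simp add: cinner_self)
  also have "\<dots> = cinner x x - cinner x z - cinner z x + cinner z z"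
    by (simp add: cinner_diff_left cinner_diff_right)
  also have "\<dots> = of_real (2 * (real CARD('n)) - 2 * mm)" using czz cxx cxz phase by simp
  finally show ?thesis using of_real_eq_iff by blast
qed

lemma psq: "(norm (x + z))^2 = 2 * (real CARD('n)) + 2 * mm"
proof -
  have "of_real ((norm (x + z))^2) = cinner (x + z) (x + z)" by (simp add: cinner_self)
  also have "\<dots> = cinner x x + cinner x z + cinner z x + cinner z z"
    by (simp add: cinner_add_left cinner_add_right)
  also have "\<dots> = of_real (2 * (real CARD('n)) + 2 * mm)" using czz cxx cxz phase by simp
  finally show ?thesis using of_real_eq_iff by blast
qed

lemma ReqC: "Re (qform CC y) = (cmod (cinner z y))^2 + \<sigma> * Re (qform W y)"
  by (simp add: qC)

lemma opt_z: "(real CARD('n))^2 + \<sigma> * Re (qform W z) \<le> mm^2 + \<sigma> * Re (qform W x)"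
proof -
  have "Re (qform CC z) \<le> Re (qform CC x)" using opt uz by blast
  moreover have "cmod (cinner z z) = real CARD('n)" using czz by simp
  ultimately show ?thesis using ReqC[of z] ReqC[of x] by simp
qed

lemma diffW: "Re (qform W x) - Re (qform W z) = Re (cinner (x - z) (W *v (x + z)))"
proof -
  have "cinner (x - z) (W *v (x + z)) = qform W x + cinner x (W *v z) - cinner z (W *v x) - qform W z"
    unfolding qform_def by (simp add: matrix_vector_right_distrib cinner_add_right cinner_diff_left)
  moreover have "cinner x (W *v z) = cnj (cinner z (W *v x))"
    by (metis herm_move[OF hW] cinner_cnj)
  ultimately show ?thesis by simp
qed

lemma diffW_bd: "Re (qform W x) - Re (qform W z) \<le> norm (x - z) * (3 * sqrt (real CARD('n))) * norm (x + z)"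
proof -
  have "Re (cinner (x - z) (W *v (x + z))) \<le> cmod (cinner (x - z) (W *v (x + z)))" by (rule complex_Re_le_cmod)
  also have "\<dots> \<le> norm (x - z) * norm (W *v (x + z))" by (rule cinner_cs)
  also have "\<dots> \<le> norm (x - z) * (op_norm W * norm (x + z))" by (intro mult_left_mono onorm_bd) auto
  also have "\<dots> \<le> norm (x - z) * (3 * sqrt (real CARD('n)) * norm (x + z))" using opW by (intro mult_left_mono mult_right_mono) auto
  finally show ?thesis using diffW by (simp add: mult.assoc)
qed

lemma mm_le: "mm \<le> (real CARD('n))" using dsq zero_le_power2[of "norm (x - z)"] by linarith

lemma l2sq: "(norm (x - z))^2 \<le> 72 * \<sigma>^2"
proof -
  define d where "d = norm (x - z)"
  define p where "p = norm (x + z)"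
  define q where "q = sqrt (real CARD('n))"
  have N2: "(real CARD('n)) \<ge> 2" using n2 by simp
  have q2: "q^2 = (real CARD('n))" unfolding q_def by simp
  have qp: "q \<ge> 0" unfolding q_def by simp
  have d0: "d \<ge> 0" "p \<ge> 0" unfolding d_def p_def by auto
  have D: "d^2 = 2 * (real CARD('n)) - 2 * mm" unfolding d_def by (rule dsq)
  have P: "p^2 = 2 * (real CARD('n)) + 2 * mm" unfolding p_def by (rule psq)
  have "(real CARD('n))^2 - mm^2 \<le> \<sigma> * (Re (qform W x) - Re (qform W z))" using opt_z by (simp add: algebra_simps)
  also have "\<dots> \<le> \<sigma> * (d * (3 * q) * p)" using diffW_bd sig unfolding d_def p_def q_def by (intro mult_left_mono) auto
  finally have ineq: "(real CARD('n))^2 - mm^2 \<le> \<sigma> * (d * (3 * q) * p)" .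
  have "(d * p)^2 = d^2 * p^2" by (simp add: power_mult_distrib)
  also have "\<dots> = (2 * (real CARD('n)) - 2 * mm) * (2 * (real CARD('n)) + 2 * mm)" using D P by simp
  also have "\<dots> = 4 * ((real CARD('n))^2 - mm^2)" by (simp add: algebra_simps power2_eq_square)
  finally have "(d * p)^2 = 4 * ((real CARD('n))^2 - mm^2)" .
  also have "4 * ((real CARD('n))^2 - mm^2) \<le> 4 * (\<sigma> * (d * (3 * q) * p))" using ineq by simp
  also have "4 * (\<sigma> * (d * (3 * q) * p)) = 12 * \<sigma> * q * (d * p)" by (simp add: ac_simps)
  finally have t: "(d * p)^2 \<le> 12 * \<sigma> * q * (d * p)" .
  have tb: "d * p \<le> 12 * \<sigma> * q"
  proof (cases "d * p = 0")
    case True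
    have "0 \<le> 12 * \<sigma> * q" using sig qp by simp
    then show ?thesis by (simp only: True)
  next
    case False
    then have "d * p > 0" using d0 by (simp add: less_le)
    then show ?thesis using t mult_right_le_imp_le[of "d*p" "d*p" "12*\<sigma>*q"] by (simp add: power2_eq_square)
  qed
  have "(d * p)^2 \<le> (12 * \<sigma> * q)^2" using tb d0 by (intro power_mono) auto
  then have "d^2 * p^2 \<le> 144 * \<sigma>^2 * (real CARD('n))" using q2 by (simp add: power_mult_distrib)
  moreover have "d^2 * (2 * (real CARD('n))) \<le> d^2 * p^2" using P by (intro mult_left_mono) auto
  moreover have "(72 * \<sigma>^2) * (2 * (real CARD('n))) = 144 * \<sigma>^2 * (real CARD('n))" by simp
  ultimately have "d^2 * (2 * (real CARD('n))) \<le> (72 * \<sigma>^2) * (2 * (real CARD('n)))" by linarith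
  then show ?thesis unfolding d_def[symmetric] using N2 mult_right_le_imp_le[of "d^2" "2 * (real CARD('n))" "72 * \<sigma>^2"] by simp
qed


abbreviation "mm4 \<equiv> cmod (cinner z x)"
abbreviation "CC4 \<equiv> outer z z + (\<chi> i j. complex_of_real \<sigma> * W $ i $ j)"

lemma d_le9: "norm (x - z) \<le> 9 * \<sigma>"
proof -
  have a: "(9 * \<sigma>)^2 = 81 * \<sigma>^2" by (simp add: power_mult_distrib)
  have "(norm (x - z))^2 \<le> (9 * \<sigma>)^2" using l2sq zero_le_power2[of \<sigma>] a by linarith
  moreover have "0 \<le> 9 * \<sigma>" using sig by simp
  ultimately show ?thesis by (rule power2_le_imp_le)
qed

lemma CCx: "(CC4 *v x)$i = of_real mm4 * z$i + of_real \<sigma> * (W *v x)$i"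
proof -
  have e: "of_real mm4 = cinner z x" using phase by (rule sym)
  show ?thesis unfolding e by (simp add: Cmv)
qed

lemma CCii: "Re (CC4$i$i) \<ge> 1 - \<sigma> * (3 * sqrt (real CARD('n)))"
proof -
  have zi: "cmod (z$i) = 1" using uz unfolding unimodular_def by simp
  have "CC4$i$i = z$i * cnj (z$i) + of_real \<sigma> * W$i$i" by (simp add: outer_def)
  moreover have "z$i * cnj (z$i) = 1" by (metis zi complex_norm_square of_real_1 power_one)
  ultimately have "Re (CC4$i$i) = 1 + \<sigma> * Re (W$i$i)" by simp
  moreover have "- cmod (W$i$i) \<le> Re (W$i$i)" using abs_Re_le_cmod[of "W$i$i"] by linarith
  moreover have "cmod (W$i$i) \<le> 3 * sqrt (real CARD('n))" using diag_le[of W i] opW by linarith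
  moreover have "\<sigma> * cmod (W$i$i) \<le> \<sigma> * (3 * sqrt (real CARD('n)))"
    using sig \<open>cmod (W$i$i) \<le> 3 * sqrt (real CARD('n))\<close> by (intro mult_left_mono) auto
  moreover have "\<sigma> * (- cmod (W$i$i)) \<le> \<sigma> * Re (W$i$i)"
    using sig \<open>- cmod (W$i$i) \<le> Re (W$i$i)\<close> by (intro mult_left_mono) auto
  ultimately show ?thesis by simp
qed

lemma Wx_i: "cmod ((W *v x)$i) \<le> 3 * sqrt (real CARD('n)) * sqrt (ln (real CARD('n))) + 3 * sqrt (real CARD('n)) * norm (x - z)"
proof -
  have "W *v x = W *v z + W *v (x - z)" by (simp add: matrix_vector_mult_diff_distrib)
  then have "cmod ((W *v x)$i) \<le> cmod ((W *v z)$i) + cmod ((W *v (x - z))$i)"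
    by (simp add: norm_triangle_ineq)
  moreover have "cmod ((W *v z)$i) \<le> inf_norm (W *v z)"
    unfolding inf_norm_def by (rule Max_ge) auto
  moreover have "cmod ((W *v (x - z))$i) \<le> op_norm W * norm (x - z)" by (rule comp_le)
  moreover have "op_norm W * norm (x - z) \<le> 3 * sqrt (real CARD('n)) * norm (x - z)"
    using opW by (intro mult_right_mono) auto
  ultimately show ?thesis using infW by linarith
qed

lemma linf_i: "cmod ((x - z)$i) \<le> 6 * (sqrt (ln (real CARD('n))) + 29 * \<sigma>) * \<sigma> / sqrt (real CARD('n))"
proof -
  define q where "q = sqrt (real CARD('n))"
  define L where "L = sqrt (ln (real CARD('n)))"
  define d where "d = norm (x - z)"
  define R where "R = 6 * (L + 29 * \<sigma>) * \<sigma> / q"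
  have N2: "real CARD('n) \<ge> 2" using n2 by simp
  have q1: "q \<ge> 1" unfolding q_def using N2 by simp
  have q2: "q^2 = real CARD('n)" unfolding q_def by simp
  have L0: "L \<ge> 0" unfolding L_def using N2 by simp
  have L2: "L^2 \<le> q" unfolding L_def q_def using N2 ln_le_sqrt[of "real CARD('n)"] by simp
  have d0: "d \<ge> 0" unfolding d_def by simp
  have d9: "d \<le> 9 * \<sigma>" unfolding d_def by (rule d_le9)
  have d72: "d^2 \<le> 72 * \<sigma>^2" unfolding d_def by (rule l2sq)
  have cd: "cmod ((x - z)$i) \<le> d" unfolding d_def by (rule Finite_Cartesian_Product.norm_nth_le)
  have c2: "cmod ((x - z)$i) \<le> 2"
  proof -
    have "cmod ((x - z)$i) \<le> cmod (x$i) + cmod (z$i)" by (simp add: norm_triangle_ineq4)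
    then show ?thesis using ux uz unfolding unimodular_def by simp
  qed
  have "R = (6 * L * \<sigma> + 174 * \<sigma>^2) / q" unfolding R_def by (simp add: algebra_simps power2_eq_square)
  then have Rsplit: "R = 6 * L * \<sigma> / q + 174 * \<sigma>^2 / q" by (simp add: add_divide_distrib)
  have R0: "6 * L * \<sigma> / q \<ge> 0" using L0 sig q1 by simp
  show ?thesis
  proof (cases "d \<le> R \<or> 2 \<le> R")
    case True
    then show ?thesis using cd c2 unfolding R_def q_def L_def by auto
  next
    case False
    then have Rd: "R < d" and R2: "R < 2" by auto
    have s0: "\<sigma> > 0"
    proof (rule ccontr)
      assume "\<not> \<sigma> > 0"
      then have "\<sigma> = 0" using sig by simp
      then have "d = 0" using d9 d0 by simp
      moreover have "R = 0" using \<open>\<sigma> = 0\<close> unfolding R_def by simp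
      ultimately show False using Rd by simp
    qed
    have "174 * \<sigma>^2 / q < 2" using Rsplit R0 R2 by linarith
    then have "174 * \<sigma>^2 < 2 * q" using q1 by (simp add: pos_divide_less_eq)
    then have s87: "87 * \<sigma>^2 < q" by simp
    have sL: "9 * (\<sigma> * L) < q"
    proof -
      have "(9 * (\<sigma> * L))^2 = 81 * (\<sigma>^2 * L^2)" by (simp add: power_mult_distrib)
      also have "\<dots> \<le> 81 * (\<sigma>^2 * q)" using L2 by (intro mult_left_mono) auto
      also have "\<dots> < 87 * (\<sigma>^2 * q)"
      proof -
        have "\<sigma>^2 * q > 0" using s0 q1 by simp
        then show ?thesis by linarith
      qed
      also have "\<dots> < q * q"
      proof -
        have "(87 * \<sigma>^2) * q < q * q" using s87 q1 by (intro mult_strict_right_mono) auto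
        then show ?thesis by (simp add: mult.assoc)
      qed
      finally have "(9 * (\<sigma> * L))^2 < q * q" .
      moreover have "q * q = q^2" by (simp add: power2_eq_square)
      ultimately have "(9 * (\<sigma> * L))^2 < q^2" by simp
      moreover have "0 \<le> q" using q1 by simp
      ultimately show ?thesis by (rule power2_less_imp_less)
    qed
    have mm_eq: "mm4 = q^2 - d^2/2" using dsq q2 unfolding d_def by linarith
    have mpos: "mm4 > 0"
    proof -
      have "d^2/2 \<le> 36 * \<sigma>^2" using d72 by simp
      also have "\<dots> < q" using s87 zero_le_power2[of \<sigma>] by linarith
      also have "q \<le> q^2" using q1 by (simp add: power2_eq_square)
      finally show ?thesis using mm_eq by linarith
    qed
    obtain l where l: "(CC4 *v x)$i = of_real l * x$i" "Re (CC4$i$i) \<le> l"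
      using coord_opt[OF hermC[OF hW] ux opt] by blast
    define e where "e = of_real \<sigma> * (W *v x)$i"
    have eq: "of_real l * x$i = of_real mm4 * z$i + e" using l(1) CCx unfolding e_def by simp
    have ce: "cmod e \<le> 3 * \<sigma> * q * (L + d)"
    proof -
      have "cmod e = \<sigma> * cmod ((W *v x)$i)" unfolding e_def using sig by (simp add: norm_mult)
      also have "\<dots> \<le> \<sigma> * (3 * q * L + 3 * q * d)" using Wx_i sig unfolding q_def L_def d_def
        by (intro mult_left_mono) auto
      finally show ?thesis by (simp add: algebra_simps)
    qed
    have xi: "cmod (x$i) = 1" "cmod (z$i) = 1" using ux uz unfolding unimodular_def by auto
    show ?thesis
    proof (cases "l \<ge> 0")
      case True
      have "cmod ((x - z)$i) = cmod (x$i - z$i)" by simp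
      also have "\<dots> \<le> 2 * cmod e / mm4" by (rule good_case[OF xi True mpos eq])
      also have "\<dots> \<le> 2 * (3 * \<sigma> * q * (L + d)) / mm4" using ce mpos by (intro divide_right_mono) auto
      also have "\<dots> \<le> R"
      proof -
        have ag: "q^2 * (L + d) \<le> mm4 * (L + 29 * \<sigma>)"
          using arith_good[OF s0 q1 s87 sL L0 d0 d9 d72] mm_eq by simp
        have "2 * (3 * \<sigma> * q * (L + d)) * q = 6 * \<sigma> * (q^2 * (L + d))" by (simp add: power2_eq_square algebra_simps)
        also have "\<dots> \<le> 6 * \<sigma> * (mm4 * (L + 29 * \<sigma>))" using ag s0 by (intro mult_left_mono) auto
        also have "\<dots> = (6 * (L + 29 * \<sigma>) * \<sigma>) * mm4" by (simp add: algebra_simps)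
        finally have "2 * (3 * \<sigma> * q * (L + d)) * q \<le> (6 * (L + 29 * \<sigma>) * \<sigma>) * mm4" .
        then have "(2 * (3 * \<sigma> * q * (L + d)) * q) / (mm4 * q) \<le> ((6 * (L + 29 * \<sigma>) * \<sigma>) * mm4) / (mm4 * q)"
          using mpos q1 by (intro divide_right_mono) auto
        moreover have "(2 * (3 * \<sigma> * q * (L + d)) * q) / (mm4 * q) = 2 * (3 * \<sigma> * q * (L + d)) / mm4"
          using q1 by simp
        moreover have "((6 * (L + 29 * \<sigma>) * \<sigma>) * mm4) / (mm4 * q) = 6 * (L + 29 * \<sigma>) * \<sigma> / q"
          using mpos by simp
        ultimately show ?thesis unfolding R_def by simp
      qed
      finally show ?thesis unfolding R_def q_def L_def .
    next
      case False
      then have "l < 0" by simp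
      have "mm4 - cmod e \<le> - l" by (rule bad_case[OF xi \<open>l < 0\<close> eq])
      moreover have "l \<ge> 1 - \<sigma> * (3 * q)" using l(2) CCii[of i] unfolding q_def by linarith
      moreover have "\<sigma> * (3 * q) = 3 * \<sigma> * q" by simp
      ultimately have "mm4 \<le> 3 * \<sigma> * q * (L + d) + 3 * \<sigma> * q - 1" using ce by linarith
      then have "mm4 \<le> 3 * \<sigma> * q * (L + d + 1) - 1" by (simp add: algebra_simps)
      moreover have "q^2 - d^2/2 > 3 * \<sigma> * q * (L + d + 1) - 1" by (rule arith_bad[OF s0 q1 s87 sL L0 d0 d9 d72])
      ultimately show ?thesis using mm_eq by linarith
    qed
  qed
qed

lemma linf: "inf_norm (x - z) \<le> 6 * (sqrt (ln (real CARD('n))) + 29 * \<sigma>) * \<sigma> / sqrt (real CARD('n))"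
  unfolding inf_norm_def using linf_i by (subst Max_le_iff) auto

lemma l2: "norm (x - z) \<le> 12 * \<sigma>" using d_le9 sig by simp


abbreviation "mm6 \<equiv> cmod (cinner z x)"
abbreviation "CC6 \<equiv> outer z z + (\<chi> i j. complex_of_real \<sigma> * W $ i $ j)"
abbreviation "lam i \<equiv> Re (cnj (x$i) * (CC6 *v x)$i)"
abbreviation "DD \<equiv> (\<chi> i k. if i = k then (of_real (lam i) :: complex) else 0)"
abbreviation "SS \<equiv> DD - CC6"

lemma xx1: "cnj (x$i) * x$i = 1"
proof -
  have "cmod (x$i) = 1" using ux unfolding unimodular_def by simp
  then show ?thesis by (metis complex_norm_square mult.commute of_real_1 power_one)
qed

lemma CClam: "(CC6 *v x)$i = of_real (lam i) * x$i"
proof -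
  obtain l where l: "(CC6 *v x)$i = of_real l * x$i"
    using coord_opt[OF hermC[OF hW] ux opt] by blast
  have "cnj (x$i) * (CC6 *v x)$i = of_real l" unfolding l using xx1[of i]
    by (metis mult.commute mult.left_commute mult.right_neutral)
  then have "lam i = l" by simp
  then show ?thesis using l by simp
qed

lemma hermSS: "hermitian SS"
  unfolding hermitian_def
proof (intro allI)
  fix i j
  have "CC6$i$j = cnj (CC6$j$i)" using hermC[OF hW] unfolding hermitian_def by blast
  then show "SS$i$j = cnj (SS$j$i)" by simp
qed

lemma SSx: "SS *v x = 0"
proof -
  have "DD *v x = CC6 *v x" using CClam diag_mv[of lam x] by (simp add: vec_eq_iff)
  then show ?thesis by (simp add: matrix_vector_mult_diff_rdistrib)
qed

lemma qDD: "qform DD v = of_real (\<Sum>i\<in>UNIV. lam i * (cmod (v$i))^2)"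
  by (rule qdiag)

lemma ReqSS: "Re (qform SS v) = (\<Sum>i\<in>UNIV. lam i * (cmod (v$i))^2) - Re (qform CC6 v)"
  by (simp add: qform_diff qDD)

lemma SS_lb:
  assumes B: "\<forall>i. lam i \<ge> B" and u: "cinner x u = 0"
  shows "Re (qform SS u) \<ge> (B - (norm (x - z))^2 - 3 * \<sigma> * sqrt (real CARD('n))) * (norm u)^2"
proof -
  have s1: "(\<Sum>i\<in>UNIV. lam i * (cmod (u$i))^2) \<ge> B * (norm u)^2"
  proof -
    have "B * (norm u)^2 = (\<Sum>i\<in>UNIV. B * (cmod (u$i))^2)" by (simp add: norm_sq sum_distrib_left)
    also have "\<dots> \<le> (\<Sum>i\<in>UNIV. lam i * (cmod (u$i))^2)" using B by (intro sum_mono mult_right_mono) auto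
    finally show ?thesis .
  qed
  have s2: "(cmod (cinner z u))^2 \<le> (norm (x - z))^2 * (norm u)^2"
  proof -
    have "cinner z u = - cinner (x - z) u" using u by (simp add: cinner_diff_left)
    then have "cmod (cinner z u) = cmod (cinner (x - z) u)" by simp
    also have "\<dots> \<le> norm (x - z) * norm u" by (rule cinner_cs)
    finally have "cmod (cinner z u) \<le> norm (x - z) * norm u" .
    then have "(cmod (cinner z u))^2 \<le> (norm (x - z) * norm u)^2" by (intro power_mono) auto
    then show ?thesis by (simp add: power_mult_distrib)
  qed
  have s3: "\<sigma> * Re (qform W u) \<le> 3 * \<sigma> * sqrt (real CARD('n)) * (norm u)^2"
  proof -
    have "Re (qform W u) \<le> cmod (qform W u)" by (rule complex_Re_le_cmod)
    also have "\<dots> \<le> norm u * norm (W *v u)" unfolding qform_def by (rule cinner_cs)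
    also have "\<dots> \<le> norm u * (op_norm W * norm u)" by (intro mult_left_mono onorm_bd) auto
    also have "\<dots> \<le> norm u * (3 * sqrt (real CARD('n)) * norm u)" using opW by (intro mult_left_mono mult_right_mono) auto
    finally have "Re (qform W u) \<le> 3 * sqrt (real CARD('n)) * (norm u)^2" by (simp add: power2_eq_square mult_ac)
    then have "\<sigma> * Re (qform W u) \<le> \<sigma> * (3 * sqrt (real CARD('n)) * (norm u)^2)" using sig by (intro mult_left_mono) auto
    then show ?thesis by (simp add: mult_ac)
  qed
  have "Re (qform SS u) = (\<Sum>i\<in>UNIV. lam i * (cmod (u$i))^2) - (cmod (cinner z u))^2 - \<sigma> * Re (qform W u)"
    unfolding ReqSS ReqC by simp
  also have "\<dots> \<ge> B * (norm u)^2 - (norm (x - z))^2 * (norm u)^2 - 3 * \<sigma> * sqrt (real CARD('n)) * (norm u)^2"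
    using s1 s2 s3 by linarith
  finally show ?thesis by (simp add: algebra_simps)
qed


lemma root4: "(root 4 (real CARD('n)))^2 = sqrt (real CARD('n))"
proof -
  define r where "r = root 4 (real CARD('n))"
  have "r ^ 4 = real CARD('n)" unfolding r_def by simp
  then have "(r^2)^2 = real CARD('n)" by (simp add: power_mult[symmetric])
  then have "sqrt (real CARD('n)) = sqrt ((r^2)^2)" by simp
  also have "\<dots> = r^2" using real_sqrt_abs[of "r^2"] by simp
  finally show ?thesis unfolding r_def by simp
qed

context
  assumes s18: "\<sigma> \<le> (1/18) * root 4 (real CARD('n))"
begin

lemma s324: "324 * \<sigma>^2 \<le> sqrt (real CARD('n))"
proof -
  have "18 * \<sigma> \<le> root 4 (real CARD('n))" using s18 by simp
  then have "(18 * \<sigma>)^2 \<le> (root 4 (real CARD('n)))^2" using sig by (intro power_mono) auto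
  then show ?thesis unfolding root4 by (simp add: power_mult_distrib)
qed

lemma sdp_facts:
  shows "6 * (sqrt (ln (real CARD('n))) + 29 * \<sigma>) * \<sigma> / sqrt (real CARD('n)) \<le> 47/54"
    and "3 * \<sigma> * sqrt (real CARD('n)) * (sqrt (ln (real CARD('n))) + norm (x - z)) \<le> real CARD('n)/4"
    and "(norm (x - z))^2 \<le> 2 * sqrt (real CARD('n)) / 9"
    and "(real CARD('n) - sqrt (real CARD('n))/9) * (3623/5832) - real CARD('n)/4 - 2 * sqrt (real CARD('n))/9 - 3 * \<sigma> * sqrt (real CARD('n)) > 0"
proof -
  have N2: "real CARD('n) \<ge> 2" using n2 by simp
  have a1: "(sqrt (real CARD('n)))^2 \<ge> 2" using N2 by simp
  have a2: "(sqrt (ln (real CARD('n))))^2 \<le> sqrt (real CARD('n))" using N2 ln_le_sqrt[of "real CARD('n)"] by simp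
  note A = sdp_arith[OF a1 _ sig s324 _ a2 _ l2sq]
  show "6 * (sqrt (ln (real CARD('n))) + 29 * \<sigma>) * \<sigma> / sqrt (real CARD('n)) \<le> 47/54"
    using A(1) N2 by simp
  show "3 * \<sigma> * sqrt (real CARD('n)) * (sqrt (ln (real CARD('n))) + norm (x - z)) \<le> real CARD('n)/4"
    using A(2) N2 by simp
  show "(norm (x - z))^2 \<le> 2 * sqrt (real CARD('n)) / 9"
    using A(3) N2 by simp
  show "(real CARD('n) - sqrt (real CARD('n))/9) * (3623/5832) - real CARD('n)/4 - 2 * sqrt (real CARD('n))/9 - 3 * \<sigma> * sqrt (real CARD('n)) > 0"
    using A(4) N2 by simp
qed

lemma lam_lb: "lam i \<ge> (real CARD('n) - sqrt (real CARD('n))/9) * (3623/5832) - real CARD('n)/4"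
proof -
  define q where "q = sqrt (real CARD('n))"
  have N2: "real CARD('n) \<ge> 2" using n2 by simp
  have q2: "q^2 = real CARD('n)" unfolding q_def by simp
  define e where "e = of_real \<sigma> * (W *v x)$i"
  define \<epsilon> where "\<epsilon> = cmod (x$i - z$i)"
  have xi: "cmod (x$i) = 1" "cmod (z$i) = 1" using ux uz unfolding unimodular_def by auto
  have lam_eq: "lam i = mm6 * Re (cnj (x$i) * z$i) + Re (cnj (x$i) * e)"
    unfolding CCx e_def by (simp add: algebra_simps)
  have re1: "Re (cnj (x$i) * z$i) = 1 - \<epsilon>^2/2"
  proof -
    have "(cmod (x$i))^2 = 1" "(cmod (z$i))^2 = 1" using xi by simp_all
    then show ?thesis unfolding \<epsilon>_def using cmod_diff_sq[of "x$i" "z$i"] by linarith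
  qed
  have eps: "\<epsilon> \<le> 47/54" unfolding \<epsilon>_def using linf_i[of i] sdp_facts(1) by simp
  have eps2: "\<epsilon>^2 \<le> (47/54)^2" using eps unfolding \<epsilon>_def by (intro power_mono) auto
  have f1: "1 - \<epsilon>^2/2 \<ge> 3623/5832" using eps2 by (simp add: power2_eq_square)
  have mmeq: "mm6 = real CARD('n) - (norm (x - z))^2 / 2" using dsq by linarith
  have mmlb: "mm6 \<ge> real CARD('n) - q/9" using mmeq sdp_facts(3) unfolding q_def by simp
  have mmpos: "real CARD('n) - q/9 \<ge> 0"
  proof -
    have q1: "q \<ge> 1" unfolding q_def using N2 by simp
    have "q \<le> q^2" using q1 by (simp add: power2_eq_square)
    then show ?thesis using q2 N2 by simp
  qed
  have t1: "mm6 * Re (cnj (x$i) * z$i) \<ge> (real CARD('n) - q/9) * (3623/5832)"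
    unfolding re1 using mmlb f1 mmpos by (intro mult_mono) auto
  have ce: "cmod e \<le> real CARD('n)/4"
  proof -
    have "cmod e = \<sigma> * cmod ((W *v x)$i)" unfolding e_def using sig by (simp add: norm_mult)
    also have "\<dots> \<le> \<sigma> * (3 * q * sqrt (ln (real CARD('n))) + 3 * q * norm (x - z))"
      using Wx_i[of i] sig unfolding q_def by (intro mult_left_mono) auto
    also have "\<dots> = 3 * \<sigma> * q * (sqrt (ln (real CARD('n))) + norm (x - z))" by (simp add: algebra_simps)
    also have "\<dots> \<le> real CARD('n)/4" using sdp_facts(2) unfolding q_def .
    finally show ?thesis .
  qed
  have t2: "Re (cnj (x$i) * e) \<ge> - cmod e"
  proof -
    have "- Re (cnj (x$i) * e) \<le> cmod (cnj (x$i) * e)" using abs_Re_le_cmod[of "cnj (x$i) * e"] by linarith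
    also have "\<dots> = cmod e" using xi by (simp add: norm_mult)
    finally show ?thesis by linarith
  qed
  show ?thesis using lam_eq t1 t2 ce unfolding q_def by linarith
qed

lemma SS_pos:
  shows "Re (qform SS v) \<ge> 0" and "Re (qform SS v) = 0 \<Longrightarrow> v = (cinner x v / of_real (real CARD('n))) *s x"
proof -
  define c where "c = cinner x v / of_real (real CARD('n))"
  define u where "u = v - c *s x"
  have N0: "real CARD('n) > 0" by simp
  have vu: "v = c *s x + u" unfolding u_def by simp
  have u0: "cinner x u = 0" unfolding u_def c_def using N0 by (simp add: cinner_diff_right cinner_scale_right cxx)
  define K where "K = (real CARD('n) - sqrt (real CARD('n))/9) * (3623/5832) - real CARD('n)/4 - (norm (x - z))^2 - 3 * \<sigma> * sqrt (real CARD('n))"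
  have Kpos: "K > 0" unfolding K_def using sdp_facts(3,4) by linarith
  have "Re (qform SS v) = Re (qform SS u)" unfolding vu by (simp add: shift_qform[OF hermSS SSx])
  also have "Re (qform SS u) \<ge> K * (norm u)^2"
    unfolding K_def by (rule SS_lb[OF _ u0]) (use lam_lb in auto)
  finally have main: "Re (qform SS v) \<ge> K * (norm u)^2" .
  then show "Re (qform SS v) \<ge> 0" using Kpos by (smt (verit) mult_nonneg_nonneg zero_le_power2)
  assume "Re (qform SS v) = 0"
  then have "K * (norm u)^2 \<le> 0" using main by simp
  then have "(norm u)^2 \<le> 0" using Kpos by (simp add: mult_le_0_iff)
  then have "u = 0" by simp
  then show "v = (cinner x v / of_real (real CARD('n))) *s x" using vu c_def by simp
qed

end


end


lemma sum_list_sum_swap: "sum_list (map (\<lambda>v. \<Sum>i\<in>UNIV. f i v) V) = (\<Sum>i\<in>UNIV. sum_list (map (\<lambda>v. f i v) V))"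
  for f :: "'i::finite \<Rightarrow> 'a \<Rightarrow> real"
  by (induction V) (simp_all add: sum.distrib)

lemma outer_scale: "(outer (c *s x) (c *s x)) $ i $ k = (c * cnj c) * (x$i * cnj (x$k))"
  by (simp add: outer_def mult_ac)

lemma outer_diag: "(outer v v)$i$i = of_real ((cmod (v$i))^2)"
  unfolding outer_def vec_lambda_beta by (rule complex_norm_square[symmetric])

theorem lemma3:
  fixes z x :: "complex^'n" and W :: "complex^'n^'n" and \<sigma> :: real
  assumes n2: "CARD('n) \<ge> 2"
    and sig: "\<sigma> \<ge> 0"
    and z: "unimodular z"
    and W: "hermitian W" "discordant z W"
    and x: "unimodular x"
    and opt: "\<forall>y. unimodular y \<longrightarrow>
        Re (qform (outer z z + (\<chi> i j. complex_of_real \<sigma> * W $ i $ j)) y) \<le> Re (qform (outer z z + (\<chi> i j. complex_of_real \<sigma> * W $ i $ j)) x)"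
    and phase: "cinner z x = of_real (cmod (cinner z x))"
  shows "inf_norm (x - z) \<le> 6 * (sqrt (ln (real CARD('n))) + 29 * \<sigma>) * \<sigma> / sqrt (real CARD('n))
     \<and> norm (x - z) \<le> 12 * \<sigma>
     \<and> (\<sigma> \<le> (1/18) * root 4 (real CARD('n)) \<longrightarrow>
          sdp_feasible (outer x x) \<and>
          (\<forall>X. sdp_feasible X \<and> X \<noteq> outer x x \<longrightarrow>
             Re (trace_c ((outer z z + (\<chi> i j. complex_of_real \<sigma> * W $ i $ j)) ** X))
               < Re (trace_c ((outer z z + (\<chi> i j. complex_of_real \<sigma> * W $ i $ j)) ** outer x x))))"
proof (intro conjI impI)
  show "inf_norm (x - z) \<le> 6 * (sqrt (ln (real CARD('n))) + 29 * \<sigma>) * \<sigma> / sqrt (real CARD('n))"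
    by (rule linf[OF n2 sig z W x opt phase])
  show "norm (x - z) \<le> 12 * \<sigma>"
    by (rule l2[OF n2 sig z W x opt phase])
  have xx1: "x$i * cnj (x$i) = 1" for i
  proof -
    have "cmod (x$i) = 1" using x unfolding unimodular_def by simp
    then show ?thesis by (metis complex_norm_square of_real_1 power_one)
  qed
  show "sdp_feasible (outer x x)"
    unfolding sdp_feasible_def using psd_outer xx1 by (simp add: outer_def)
  assume s18: "\<sigma> \<le> (1/18) * root 4 (real CARD('n))"
  let ?C = "outer z z + (\<chi> i j. complex_of_real \<sigma> * W $ i $ j)"
  let ?lam = "\<lambda>i. Re (cnj (x$i) * (?C *v x)$i)"
  let ?S = "(\<chi> i k. if i = k then (of_real (?lam i) :: complex) else 0) - ?C"
  note SSp = SS_pos[OF n2 sig z W x opt phase s18]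
  note ReqSS = ReqSS[OF n2 sig z W x opt phase]
  note SSx = SSx[OF n2 sig z W x opt phase]
  show "\<forall>X. sdp_feasible X \<and> X \<noteq> outer x x \<longrightarrow> Re (trace_c (?C ** X)) < Re (trace_c (?C ** outer x x))"
  proof (intro allI impI)
    fix X assume XA: "sdp_feasible X \<and> X \<noteq> outer x x"
    have diag1: "X$i$i = 1" for i using XA unfolding sdp_feasible_def by auto
    have psdX: "psd X" using XA unfolding sdp_feasible_def by auto
    have ne: "X \<noteq> outer x x" using XA by auto
    obtain V where V: "X = sum_list (map (\<lambda>v. outer v v) V)" using gram[OF psdX] by blast
    have diagV: "sum_list (map (\<lambda>v. (cmod (v$i))^2) V) = 1" for i
    proof -
      have "X$i$i = sum_list (map (\<lambda>v. (outer v v)$i$i) V)" unfolding V by (rule sum_list_nth2)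
      also have "\<dots> = sum_list (map (\<lambda>v. of_real ((cmod (v$i))^2)) V)"
        by (intro arg_cong[where f=sum_list] map_cong refl) (rule outer_diag)
      also have "\<dots> = of_real (sum_list (map (\<lambda>v. (cmod (v$i))^2) V))" by (simp add: of_real_sum_list)
      finally show ?thesis using diag1[of i] by simp
    qed
    have trX: "Re (trace_c (?C ** X)) = (\<Sum>i\<in>UNIV. ?lam i) - sum_list (map (\<lambda>v. Re (qform ?S v)) V)"
    proof -
      have "Re (trace_c (?C ** X)) = sum_list (map (\<lambda>v. Re (qform ?C v)) V)"
        unfolding V trace_gram Re_sum_list by (simp add: comp_def)
      also have "\<dots> = sum_list (map (\<lambda>v. (\<Sum>i\<in>UNIV. ?lam i * (cmod (v$i))^2) - Re (qform ?S v)) V)"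
        using ReqSS by simp
      also have "\<dots> = sum_list (map (\<lambda>v. \<Sum>i\<in>UNIV. ?lam i * (cmod (v$i))^2) V) - sum_list (map (\<lambda>v. Re (qform ?S v)) V)"
        by (simp add: sum_list_subtractf)
      also have "sum_list (map (\<lambda>v. \<Sum>i\<in>UNIV. ?lam i * (cmod (v$i))^2) V) = (\<Sum>i\<in>UNIV. ?lam i * sum_list (map (\<lambda>v. (cmod (v$i))^2) V))"
        unfolding sum_list_sum_swap by (simp add: sum_list_const_mult)
      also have "\<dots> = (\<Sum>i\<in>UNIV. ?lam i)" using diagV by simp
      finally show ?thesis .
    qed
    have trx: "Re (trace_c (?C ** outer x x)) = (\<Sum>i\<in>UNIV. ?lam i)"
    proof -
      have "Re (trace_c (?C ** outer x x)) = Re (qform ?C x)" by (simp add: trace_outer)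
      also have "\<dots> = (\<Sum>i\<in>UNIV. ?lam i * (cmod (x$i))^2) - Re (qform ?S x)" using ReqSS by simp
      also have "qform ?S x = 0" unfolding qform_def using SSx by simp
      finally show ?thesis using x unfolding unimodular_def by simp
    qed
    have nonneg: "\<forall>v\<in>set V. 0 \<le> Re (qform ?S v)" using SSp(1) by blast
    have pos: "sum_list (map (\<lambda>v. Re (qform ?S v)) V) > 0"
    proof (rule ccontr)
      assume "\<not> ?thesis"
      then have le0: "sum_list (map (\<lambda>v. Re (qform ?S v)) V) \<le> 0" by simp
      have zero: "Re (qform ?S v) = 0" if "v \<in> set V" for v
        using le_sum_list_nonneg[OF nonneg that] nonneg that le0 by force
      define c where "c = (\<lambda>v. cinner x v / of_real (real CARD('n)))"
      have vc: "v = c v *s x" if "v \<in> set V" for v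
        unfolding c_def by (rule SSp(2)[OF zero[OF that]])
      define t where "t = sum_list (map (\<lambda>v. c v * cnj (c v)) V)"
      have Xik: "X$i$k = t * (x$i * cnj (x$k))" for i k
      proof -
        have "X$i$k = sum_list (map (\<lambda>v. (outer v v)$i$k) V)" unfolding V by (rule sum_list_nth2)
        also have "\<dots> = sum_list (map (\<lambda>v. (c v * cnj (c v)) * (x$i * cnj (x$k))) V)"
        proof (intro arg_cong[where f=sum_list] map_cong refl)
          fix v assume "v \<in> set V"
          then have "outer v v = outer (c v *s x) (c v *s x)" using vc by metis
          then show "(outer v v)$i$k = (c v * cnj (c v)) * (x$i * cnj (x$k))" by (simp add: outer_scale)
        qed
        also have "\<dots> = t * (x$i * cnj (x$k))" unfolding t_def by (rule sum_list_mult_right)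
        finally show ?thesis .
      qed
      obtain i0 :: 'n where True by simp
      have "t = 1" using Xik[of i0 i0] diag1[of i0] xx1[of i0] by simp
      then have "X = outer x x" using Xik by (simp add: vec_eq_iff outer_def)
      then show False using ne by simp
    qed
    show "Re (trace_c (?C ** X)) < Re (trace_c (?C ** outer x x))"
      using trX trx pos by linarith
  qed
qed


end
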